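(* Consider the discrete-time linear system $x_{t+1}=Ax_t+Bu_t$, $t=0,\dots,T-1$, with $x_t\in\mathbb{R}^n$, $u_t\in\mathbb{R}^m$, finite horizon $T\in\mathbb{N}$, and random initial state $x_0\sim p_0$. Let $Q,Q_F\in\mathbb{R}^{n\times n}$ and $R\in\mathbb{R}^{m\times m}$ be symmetric positive definite, and let $\psi,\psi_F:\mathbb{R}^n\to\mathbb{R}$ be continuously differentiable, bounded from below, with $\psi(0)=\psi_F(0)=0$. Let $\mathcal{H}$ be a Hilbert space of measurable functions $\mathbb{R}^n\to\mathbb{R}^m$ with inner product $\langle\cdot,\cdot\rangle_{\mathcal H}$ and norm $\|\cdot\|_{\mathcal H}$. For a policy sequence $\pi_{0:T-1}=\{\pi_0,\dots,\pi_{T-1}\}$, $\pi_t\in\mathcal H$, with closed-loop inputs $u_t=\pi_t(x_t)$, define $V_T(x)=x^\top Q_Fx+\psi_F(x)$ and, for $t=T-1,\dots,0$, $$V_t(x)=x^\top Qx+\pi_t(x)^\top R\pi_t(x)+\psi(x)+V_{t+1}(Ax+B\pi_t(x)),$$ and the stage functional $$\tilde J_t(\pi_{t:T-1})=\mathbb{E}\big[x_t^\top Qx_t+\pi_t(x_t)^\top R\pi_t(x_t)+\psi(x_t)+V_{t+1}(Ax_t+B\pi_t(x_t))\big],$$ where the expectation is over the closed-loop state $x_t$ generated from $x_0\sim p_0$. For each $t$ and each fixed tail $\pi_{t+1:T-1}$, let $\overline{D\tilde J_t}(\cdot,\cdot,\pi_{t+1:T-1}):\mathcal H\times\mathcal H\to\mathcal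 H$ be a discrete Fréchet derivative of $\phi\mapsto\tilde J_t(\phi,\pi_{t+1:T-1})$, i.e. for all $\phi,\varphi\in\mathcal H$, $$\langle\phi-\varphi,\overline{D\tilde J_t}(\phi,\varphi,\pi_{t+1:T-1})\rangle_{\mathcal H}=\tilde J_t(\phi,\pi_{t+1:T-1})-\tilde J_t(\varphi,\pi_{t+1:T-1}),$$ and $\overline{D\tilde J_t}(\phi,\varphi,\pi_{t+1:T-1})\to D\tilde J_t(\varphi)$ (the Riesz representative of the Fréchet derivative at $\varphi$) as $\|\phi-\varphi\|_{\mathcal H}\to0$. Let $\delta>0$ and let policy sequences $\pi^k_{0:T-1}$, $k=0,1,2,\dots$, be generated by the implicit update, performed backward for $t=T-1,\dots,0$, $$\pi_t^{k+1}=\pi_t^k-\delta\,\overline{D\tilde J_t}\big(\pi_t^{k+1},\pi_t^k,\pi_{t+1:T-1}^{k+1}\big).$$ Then for every iteration $k$ and any $\delta>0$, $$\tilde J_0(\pi^{k+1}_{0:T-1})-\tilde J_0(\pi^k_{0:T-1})=-\frac{1}{\delta}\sum_{t=0}^{T-1}\|\pi_t^{k+1}-\pi_t^k\|_{\mathcal H}^2\le0.$$ Consequently, the sequence $\{\tilde J_0(\pi^k_{0:T-1})\}_{k\ge0}$ is monotonically non-increasing and converges as $k\to\infty$, and $\sum_{t=0}^{T-1}\|\pi_t^{k+1}-\pi_t^k\|_{\mathcal H}^2\to0$.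
   Context: This is a team (multi-agent) control problem: the stacked input $u_t$ collects the inputs of all team members, $B=[B_1\ \cdots\ B_N]$, and the team jointly minimizes the finite-horizon expected cost $\mathbb{E}[\sum_{t=0}^{T-1}(x_t^\top Qx_t+u_t^\top Ru_t+\psi(x_t))+x_T^\top Q_Fx_T+\psi_F(x_T)]$ over state-feedback policies in $\mathcal H$. The notation $\pi_{t:T-1}=(\pi_t,\pi_{t+1:T-1})$ denotes the tail of the policy sequence from time $t$. *)

theory Defs
  imports "HOL-Analysis.Analysis" "HOL-Probability.Probability"
begin

definition quadf :: "real^'n^'n \<Rightarrow> real^'n \<Rightarrow> real" where
  "quadf M x = x \<bullet> (M *v x)"

definition sym_posdef :: "real^'n^'n \<Rightarrow> bool" where
  "sym_posdef M \<longleftrightarrow> transpose M = M \<and> (\<forall>x. x \<noteq> 0 \<longrightarrow> quadf M x > 0)"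

definition C1_fun :: "(real^'n \<Rightarrow> real) \<Rightarrow> bool" where
  "C1_fun f \<longleftrightarrow> (\<exists>f'. (\<forall>x. (f has_derivative blinfun_apply (f' x)) (at x))
                        \<and> continuous_on UNIV f')"

text \<open>Cost-to-go V_t for the policy sequence pol (pol t \<in> H, evaluated via evh),
  horizon T.  For t \<ge> T it is the terminal cost.\<close>
function Vf :: "real^'n^'n \<Rightarrow> real^'m^'n \<Rightarrow> real^'n^'n \<Rightarrow> real^'m^'m \<Rightarrow> real^'n^'n
    \<Rightarrow> (real^'n \<Rightarrow> real) \<Rightarrow> (real^'n \<Rightarrow> real) \<Rightarrow> ('h \<Rightarrow> real^'n \<Rightarrow> real^'m) \<Rightarrow> nat
    \<Rightarrow> (nat \<Rightarrow> 'h) \<Rightarrow> nat \<Rightarrow> real^'n \<Rightarrow> real" where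
  "Vf A B Q R QF psi psiF evh T pol t x =
     (if T \<le> t then quadf QF x + psiF x
      else quadf Q x + quadf R (evh (pol t) x) + psi x
           + Vf A B Q R QF psi psiF evh T pol (Suc t) (A *v x + B *v evh (pol t) x))"
  by auto
termination
  by (relation "Wellfounded.measure (\<lambda>(A, B, Q, R, QF, psi, psiF, evh, T, pol, t, x). T - t)") auto

declare Vf.simps [simp del]

fun cl_state :: "real^'n^'n \<Rightarrow> real^'m^'n \<Rightarrow> ('h \<Rightarrow> real^'n \<Rightarrow> real^'m)
    \<Rightarrow> (nat \<Rightarrow> 'h) \<Rightarrow> nat \<Rightarrow> real^'n \<Rightarrow> real^'n" where
  "cl_state A B evh pol 0 x0 = x0"
| "cl_state A B evh pol (Suc t) x0 =
     (let x = cl_state A B evh pol t x0 in A *v x + B *v evh (pol t) x)"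

text \<open>The state x_t is generated by the prefix pol 0..t-1, the functional acts on pol t
  and the tail pol (t+1)..(T-1).\<close>
definition Jt :: "real^'n^'n \<Rightarrow> real^'m^'n \<Rightarrow> real^'n^'n \<Rightarrow> real^'m^'m \<Rightarrow> real^'n^'n
    \<Rightarrow> (real^'n \<Rightarrow> real) \<Rightarrow> (real^'n \<Rightarrow> real) \<Rightarrow> ('h \<Rightarrow> real^'n \<Rightarrow> real^'m) \<Rightarrow> nat
    \<Rightarrow> (real^'n) measure \<Rightarrow> nat \<Rightarrow> (nat \<Rightarrow> 'h) \<Rightarrow> real" where
  "Jt A B Q R QF psi psiF evh T p0 t pol =
     (\<integral>x0. Vf A B Q R QF psi psiF evh T pol t (cl_state A B evh pol t x0) \<partial>p0)"

end

theory Submission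
  imports Defs
begin

lemma cl_state_agree:
  "(\<forall>s<t. pol s = pol' s) \<Longrightarrow> cl_state A B evh pol t x = cl_state A B evh pol' t x"
  by (induction t) (auto simp: Let_def)

lemma Vf_step: "\<not> T \<le> t \<Longrightarrow> Vf A B Q R QF psi psiF evh T pol t x =
  quadf Q x + quadf R (evh (pol t) x) + psi x + Vf A B Q R QF psi psiF evh T pol (Suc t) (A *v x + B *v evh (pol t) x)"
  by (subst Vf.simps) simp

lemma Vf_diff:
  assumes "\<forall>s<t0. pol s = pol' s"
  shows "t \<le> t0 \<Longrightarrow> t \<le> T \<Longrightarrow>
    Vf A B Q R QF psi psiF evh T pol 0 x - Vf A B Q R QF psi psiF evh T pol' 0 x
    = Vf A B Q R QF psi psiF evh T pol t (cl_state A B evh pol t x)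
      - Vf A B Q R QF psi psiF evh T pol' t (cl_state A B evh pol' t x)"
proof (induction t)
  case 0
  then show ?case by simp
next
  case (Suc t)
  have e: "pol t = pol' t" using assms Suc.prems by auto
  have c: "cl_state A B evh pol t x = cl_state A B evh pol' t x"
    using assms Suc.prems by (intro cl_state_agree) auto
  have tT: "\<not> T \<le> t" using Suc.prems by auto
  have "Vf A B Q R QF psi psiF evh T pol 0 x - Vf A B Q R QF psi psiF evh T pol' 0 x
    = Vf A B Q R QF psi psiF evh T pol t (cl_state A B evh pol t x)
      - Vf A B Q R QF psi psiF evh T pol' t (cl_state A B evh pol t x)"
    using Suc.IH Suc.prems c by simp
  also have "\<dots> = Vf A B Q R QF psi psiF evh T pol (Suc t) (cl_state A B evh pol (Suc t) x)
      - Vf A B Q R QF psi psiF evh T pol' (Suc t) (cl_state A B evh pol' (Suc t) x)"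
    by (simp add: Vf_step[OF tT] e c Let_def)
  finally show ?case .
qed

lemma Vf_lower:
  assumes "\<And>x. c \<le> psi x" "\<And>x. cF \<le> psiF x" "c \<le> 0"
    and "\<And>x. quadf Q x \<ge> 0" "\<And>x. quadf QF x \<ge> 0" "\<And>x. quadf R x \<ge> 0"
  shows "Vf A B Q R QF psi psiF evh T pol t x \<ge> real (T - t) * c + cF"
proof (induction "T - t" arbitrary: t x)
  case 0
  then show ?case using assms(2,5)[of x] by (subst Vf.simps) (simp add: add_increasing)
next
  case (Suc d)
  then have "d = T - Suc t" "\<not> T \<le> t" by auto
  from Suc.hyps(1)[OF this(1)] have IH: "\<And>y. real (T - Suc t) * c + cF \<le> Vf A B Q R QF psi psiF evh T pol (Suc t) y" .
  have "real (T - t) = real (T - Suc t) + 1" using \<open>\<not> T \<le> t\<close> by auto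
  then have eq: "real (T - t) * c + cF = c + (real (T - Suc t) * c + cF)"
    by (simp add: algebra_simps)
  show ?case unfolding Vf_step[OF \<open>\<not> T \<le> t\<close>] eq
    using IH[of "A *v x + B *v evh (pol t) x"] assms(1)[of x] assms(4)[of x]
      assms(6)[of "evh (pol t) x"] by linarith
qed

lemma quadf_nonneg: "sym_posdef M \<Longrightarrow> quadf M x \<ge> 0"
  unfolding sym_posdef_def by (cases "x = 0") (auto simp: quadf_def less_imp_le)

theorem theorem1:
  fixes A :: "real^'n^'n" and B :: "real^'m^'n"
    and Q QF :: "real^'n^'n" and R :: "real^'m^'m"
    and psi psiF :: "real^'n \<Rightarrow> real"
    and evh :: "'h::{real_inner, complete_space} \<Rightarrow> real^'n \<Rightarrow> real^'m"
    and T :: nat and p0 :: "(real^'n) measure"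
    and DJbar :: "nat \<Rightarrow> (nat \<Rightarrow> 'h) \<Rightarrow> 'h \<Rightarrow> 'h \<Rightarrow> 'h"
    and \<delta> :: real and pis :: "nat \<Rightarrow> nat \<Rightarrow> 'h"
  defines "J \<equiv> Jt A B Q R QF psi psiF evh T p0"
  assumes p0: "prob_space p0" "sets p0 = sets borel"
    and Q: "sym_posdef Q" and QF: "sym_posdef QF" and R: "sym_posdef R"
    and psi: "C1_fun psi" "bdd_below (range psi)" "psi 0 = 0"
    and psiF: "C1_fun psiF" "bdd_below (range psiF)" "psiF 0 = 0"
    and H_fun: "\<And>a b x. evh (a + b) x = evh a x + evh b x"
      "\<And>c a x. evh (c *\<^sub>R a) x = c *\<^sub>R evh a x" "inj evh" "\<And>h. evh h \<in> borel_measurable borel"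
    and integr: "\<And>pol t. t \<le> T \<Longrightarrow>
        integrable p0 (\<lambda>x0. Vf A B Q R QF psi psiF evh T pol t (cl_state A B evh pol t x0))"
    and DJ_discrete: "\<And>t pol \<phi> \<phi>'. t < T \<Longrightarrow>
        inner (\<phi> - \<phi>') (DJbar t pol \<phi> \<phi>') = J t (pol(t := \<phi>)) - J t (pol(t := \<phi>'))"
    and DJ_limit: "\<And>t pol \<phi>'. t < T \<Longrightarrow> \<exists>g.
        ((\<lambda>\<phi>. J t (pol(t := \<phi>))) has_derivative (\<lambda>h. inner h g)) (at \<phi>')
        \<and> ((\<lambda>\<phi>. DJbar t pol \<phi> \<phi>') \<longlongrightarrow> g) (at \<phi>')"
    and \<delta>: "\<delta> > 0"
    and update: "\<And>k t. t < T \<Longrightarrow>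
        pis (Suc k) t = pis k t - \<delta> *\<^sub>R DJbar t (\<lambda>s. if s < t then pis k s else pis (Suc k) s)
                                       (pis (Suc k) t) (pis k t)"
  shows "(\<forall>k. J 0 (pis (Suc k)) - J 0 (pis k)
               = - (1 / \<delta>) * (\<Sum>t<T. (norm (pis (Suc k) t - pis k t))\<^sup>2)
             \<and> - (1 / \<delta>) * (\<Sum>t<T. (norm (pis (Suc k) t - pis k t))\<^sup>2) \<le> 0)
         \<and> antimono (\<lambda>k. J 0 (pis k))
         \<and> convergent (\<lambda>k. J 0 (pis k))
         \<and> (\<lambda>k. \<Sum>t<T. (norm (pis (Suc k) t - pis k t))\<^sup>2) \<longlonglongrightarrow> 0"
proof -
  have key: "J 0 pol - J 0 pol' = J t pol - J t pol'"
    if "t \<le> T" "\<forall>s<t. pol s = pol' s" for pol pol' t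
  proof -
    have "J 0 pol - J 0 pol' = (\<integral>x0. Vf A B Q R QF psi psiF evh T pol 0 x0
        - Vf A B Q R QF psi psiF evh T pol' 0 x0 \<partial>p0)"
      unfolding J_def Jt_def using integr[of 0 pol] integr[of 0 pol'] by simp
    also have "\<dots> = (\<integral>x0. Vf A B Q R QF psi psiF evh T pol t (cl_state A B evh pol t x0)
        - Vf A B Q R QF psi psiF evh T pol' t (cl_state A B evh pol' t x0) \<partial>p0)"
      by (intro Bochner_Integration.integral_cong refl) (rule Vf_diff[OF that(2) order_refl that(1)])
    also have "\<dots> = J t pol - J t pol'"
      unfolding J_def Jt_def using integr[OF that(1), of pol] integr[OF that(1), of pol'] by simp
    finally show ?thesis .
  qed
  define S where "S k = (\<Sum>t<T. (norm (pis (Suc k) t - pis k t))\<^sup>2)" for k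
  have step: "J 0 (pis (Suc k)) - J 0 (pis k) = - (1 / \<delta>) * S k" for k
  proof -
    define P where "P t = (\<lambda>s. if s < t then pis k s else pis (Suc k) s)" for t
    have one: "J 0 (P t) - J 0 (P (Suc t)) = - (1 / \<delta>) * (norm (pis (Suc k) t - pis k t))\<^sup>2"
      if t: "t < T" for t
    proof -
      have a: "(P t)(t := pis (Suc k) t) = P t" unfolding P_def by auto
      have b: "(P t)(t := pis k t) = P (Suc t)" unfolding P_def by auto
      have "J 0 (P t) - J 0 (P (Suc t)) = J t (P t) - J t (P (Suc t))"
        using t by (intro key) (auto simp: P_def)
      also have "\<dots> = inner (pis (Suc k) t - pis k t) (DJbar t (P t) (pis (Suc k) t) (pis k t))"
        using DJ_discrete[OF t, where pol="P t" and \<phi>="pis (Suc k) t" and \<phi>'="pis k t"] a b by simp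
      also have "DJbar t (P t) (pis (Suc k) t) (pis k t) = - (1/\<delta>) *\<^sub>R (pis (Suc k) t - pis k t)"
      proof -
        have u: "pis (Suc k) t - pis k t = - (\<delta> *\<^sub>R DJbar t (P t) (pis (Suc k) t) (pis k t))"
          using update[OF t, of k] unfolding P_def by (simp add: algebra_simps)
        show ?thesis unfolding u using \<delta> by simp
      qed
      also have "inner (pis (Suc k) t - pis k t) (- (1/\<delta>) *\<^sub>R (pis (Suc k) t - pis k t))
          = - (1 / \<delta>) * (norm (pis (Suc k) t - pis k t))\<^sup>2"
        by (simp add: power2_norm_eq_inner)
      finally show ?thesis .
    qed
    have "J 0 (P 0) - J 0 (P T) = (\<Sum>t<T. J 0 (P t) - J 0 (P (Suc t)))"
      by (rule sum_lessThan_telescope'[symmetric])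
    also have "\<dots> = - (1 / \<delta>) * S k" unfolding S_def sum_distrib_left
      by (rule sum.cong) (auto simp: one)
    finally have 1: "J 0 (P 0) - J 0 (P T) = - (1 / \<delta>) * S k" .
    have 2: "P 0 = pis (Suc k)" unfolding P_def by auto
    have "J 0 (P T) - J 0 (pis k) = J T (P T) - J T (pis k)"
      by (intro key) (auto simp: P_def)
    also have "\<dots> = 0"
    proof -
      have cl: "cl_state A B evh (P T) T x = cl_state A B evh (pis k) T x" for x
        by (rule cl_state_agree) (simp add: P_def)
      show ?thesis unfolding J_def Jt_def by (subst (1 2) Vf.simps) (simp add: cl)
    qed
    finally show ?thesis using 1 2 by simp
  qed
  have Snn: "S k \<ge> 0" for k unfolding S_def by (intro sum_nonneg) auto
  have le: "- (1 / \<delta>) * S k \<le> 0" for k using Snn[of k] \<delta> by simp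
  have dec: "antimono (\<lambda>k. J 0 (pis k))"
  proof (rule decseq_SucI)
    fix n show "J 0 (pis (Suc n)) \<le> J 0 (pis n)" using step[of n] le[of n] by linarith
  qed
  obtain c where c: "\<And>x. c \<le> psi x" "c \<le> 0"
    using psi(2) unfolding bdd_below_def by (metis min.cobounded1 min.cobounded2 rangeI dual_order.trans)
  obtain cF where cF: "\<And>x. cF \<le> psiF x"
    using psiF(2) unfolding bdd_below_def by auto
  interpret prob_space p0 by (rule p0(1))
  have lb: "real T * c + cF \<le> J 0 pol" for pol
  proof -
    have "(\<integral>x0. real T * c + cF \<partial>p0) \<le> J 0 pol"
      unfolding J_def Jt_def
    proof (intro integral_mono integr)
      fix x
      have "real (T - 0) * c + cF \<le> Vf A B Q R QF psi psiF evh T pol 0 x"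
        by (rule Vf_lower[OF c(1) cF c(2) quadf_nonneg[OF Q] quadf_nonneg[OF QF] quadf_nonneg[OF R]])
      then show "real T * c + cF \<le> Vf A B Q R QF psi psiF evh T pol 0 (cl_state A B evh pol 0 x)"
        by simp
    qed auto
    then show ?thesis by (simp add: prob_space)
  qed
  obtain L where L: "(\<lambda>k. J 0 (pis k)) \<longlonglongrightarrow> L"
    using decseq_convergent[OF dec, of "real T * c + cF"] lb by blast
  have "(\<lambda>k. \<delta> * (J 0 (pis k) - J 0 (pis (Suc k)))) \<longlonglongrightarrow> \<delta> * (L - L)"
    by (intro tendsto_intros L LIMSEQ_Suc)
  moreover have "\<delta> * (J 0 (pis k) - J 0 (pis (Suc k))) = S k" for k
    using step[of k] \<delta> by (simp add: field_simps)
  ultimately have "S \<longlonglongrightarrow> 0" by simp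
  then have "(\<lambda>k. \<Sum>t<T. (norm (pis (Suc k) t - pis k t))\<^sup>2) \<longlonglongrightarrow> 0"
    unfolding S_def .
  moreover have "convergent (\<lambda>k. J 0 (pis k))" using L by (rule convergentI)
  moreover have "\<forall>k. J 0 (pis (Suc k)) - J 0 (pis k)
               = - (1 / \<delta>) * (\<Sum>t<T. (norm (pis (Suc k) t - pis k t))\<^sup>2)
             \<and> - (1 / \<delta>) * (\<Sum>t<T. (norm (pis (Suc k) t - pis k t))\<^sup>2) \<le> 0"
    using step le unfolding S_def by blast
  ultimately show ?thesis using dec by blast
qed

end
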